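(* Let $A$ be a real $m\times n$ matrix, $\mathbf b\in\mathbb R^m$, $\mathbf c\in\mathbb R^n$ (row vector), such that the linear program $\max\mathbf c\mathbf x$ s.t. $A\mathbf x\le\mathbf b$, $\mathbf x\ge0$ is bounded with unique optimal primal and dual solutions $\mathbf x^*$, $\mathbf y^*$. Then for every primal feasible $\mathbf x$, \[ \mathbf c(\mathbf x^*-\mathbf x)\ge\alpha_D(A,\mathbf b,\mathbf c)\,\|A_{V,:}(\mathbf x^*-\mathbf x)\|. \]
   Context: The dual is $\min\mathbf y\mathbf b$ s.t. $\mathbf yA\ge\mathbf c$, $\mathbf y\ge0$. $V=\{j:y^*_j>0\}$, $A_{V,:}$ is the submatrix of rows indexed by $V$, and $\alpha_D(A,\mathbf b,\mathbf c)=\min_{j\in V}y^*_j$. $\|\cdot\|$ is the Euclidean norm. *)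

theory Defs
  imports "HOL-Analysis.Analysis"
begin

text \<open>LP  max c x  s.t.  A x \<le> b, x \<ge> 0  with A an m x n real matrix
  (rows indexed by 'm, columns by 'n); dual  min y b  s.t.  y A \<ge> c, y \<ge> 0.\<close>

definition primal_feasible :: "real^'n^'m \<Rightarrow> real^'m \<Rightarrow> real^'n \<Rightarrow> bool" where
  "primal_feasible A b x \<longleftrightarrow> (\<forall>i. (A *v x) $ i \<le> b $ i) \<and> (\<forall>j. 0 \<le> x $ j)"

definition dual_feasible :: "real^'n^'m \<Rightarrow> real^'n \<Rightarrow> real^'m \<Rightarrow> bool" where
  "dual_feasible A c y \<longleftrightarrow> (\<forall>j. c $ j \<le> (y v* A) $ j) \<and> (\<forall>i. 0 \<le> y $ i)"

definition primal_optimal :: "real^'n^'m \<Rightarrow> real^'m \<Rightarrow> real^'n \<Rightarrow> real^'n \<Rightarrow> bool" where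
  "primal_optimal A b c x \<longleftrightarrow> primal_feasible A b x \<and>
     (\<forall>x'. primal_feasible A b x' \<longrightarrow> c \<bullet> x' \<le> c \<bullet> x)"

definition dual_optimal :: "real^'n^'m \<Rightarrow> real^'m \<Rightarrow> real^'n \<Rightarrow> real^'m \<Rightarrow> bool" where
  "dual_optimal A b c y \<longleftrightarrow> dual_feasible A c y \<and>
     (\<forall>y'. dual_feasible A c y' \<longrightarrow> y \<bullet> b \<le> y' \<bullet> b)"

definition dual_support :: "real^'m \<Rightarrow> 'm set" where
  "dual_support y = {j. 0 < y $ j}"

text \<open>alpha_D = min over V of y*_j (only meaningful for V nonempty).\<close>
definition alpha_D :: "real^'m \<Rightarrow> real" where
  "alpha_D y = Min ((\<lambda>j. y $ j) ` dual_support y)"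

definition sub_rows_norm :: "real^'n^'m \<Rightarrow> 'm set \<Rightarrow> real^'n \<Rightarrow> real" where
  "sub_rows_norm A V v = sqrt (\<Sum>i\<in>V. ((A *v v) $ i)\<^sup>2)"

end

theory Submission
  imports Defs
begin

lemma axis_vmult: "axis i (1::real) v* (A::real^'n^'m) = A $ i"
proof -
  have "(\<Sum>k\<in>UNIV. axis i 1 $ k * A $ k $ j) = A $ i $ j" for j
    by (simp add: axis_def of_bool_def[symmetric])
  then show ?thesis by (simp add: vec_eq_iff vector_matrix_mult_def)
qed

lemma strong_dual:
  fixes A :: "real^'n^'m" and b :: "real^'m" and c :: "real^'n"
  assumes xs_opt: "primal_optimal A b c xs"
  shows "\<exists>y. dual_feasible A c y \<and> y \<bullet> b \<le> c \<bullet> xs"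
proof -
  let ?p = "c \<bullet> xs"
  define T where "T = {(y v* A - s, y \<bullet> b + t) | y s t. (\<forall>i. 0 \<le> y$i) \<and> (\<forall>j. 0 \<le> s$j) \<and> (0::real) \<le> t}"
  define G where "G = range (\<lambda>i. (A$i, b$i)) \<union> range (\<lambda>j. (- axis j 1, 0::real)) \<union> {(0::real^'n, 1::real)}"
  have finG: "finite G" by (simp add: G_def)
  have cT: "convex_cone T" unfolding convex_cone_iff
  proof (intro conjI ballI allI impI)
    show "0 \<in> T" unfolding T_def
      by (rule CollectI, rule exI[of _ 0], rule exI[of _ 0], rule exI[of _ 0]) (simp add: zero_prod_def)
  next
    fix u v assume "u \<in> T" "v \<in> T"
    then obtain y1 s1 t1 y2 s2 t2 where u: "u = (y1 v* A - s1, y1 \<bullet> b + t1)" "(\<forall>i. 0 \<le> y1$i) \<and> (\<forall>j. 0 \<le> s1$j) \<and> (0::real) \<le> t1"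
      and v: "v = (y2 v* A - s2, y2 \<bullet> b + t2)" "(\<forall>i. 0 \<le> y2$i) \<and> (\<forall>j. 0 \<le> s2$j) \<and> (0::real) \<le> t2"
      unfolding T_def by blast
    show "u + v \<in> T" unfolding T_def
      apply (rule CollectI, rule exI[of _ "y1+y2"], rule exI[of _ "s1+s2"], rule exI[of _ "t1+t2"])
      using u v by (simp add: vector_matrix_left_distrib inner_add_left algebra_simps)
  next
    fix u and r :: real assume "u \<in> T" "0 \<le> r"
    then obtain y1 s1 t1 where u: "u = (y1 v* A - s1, y1 \<bullet> b + t1)" "(\<forall>i. 0 \<le> y1$i) \<and> (\<forall>j. 0 \<le> s1$j) \<and> (0::real) \<le> t1"
      unfolding T_def by blast
    show "r *\<^sub>R u \<in> T" unfolding T_def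
      apply (rule CollectI, rule exI[of _ "r *\<^sub>R y1"], rule exI[of _ "r *\<^sub>R s1"], rule exI[of _ "r * t1"])
      using u \<open>0 \<le> r\<close> by (simp add: scaleR_vector_matrix_assoc algebra_simps)
  qed
  have GT: "G \<subseteq> T"
  proof
    fix g assume "g \<in> G"
    then consider i where "g = (A$i, b$i)" | j where "g = (- axis j 1, 0)" | "g = (0, 1)"
      unfolding G_def by blast
    then show "g \<in> T"
    proof cases
      case 1
      have nn: "\<forall>k. 0 \<le> axis i (1::real) $ k" by (simp add: axis_def)
      show ?thesis unfolding T_def 1
        apply (intro CollectI exI[of _ "axis i 1"] exI[of _ "0::real^'n"] exI[of _ "0::real"])
        using nn by (simp add: axis_vmult inner_axis')
    next
      case 2 then show ?thesis unfolding T_def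
        apply (intro CollectI exI[of _ "0::real^'m"] exI[of _ "axis j 1::real^'n"] exI[of _ "0::real"])
        by (simp add: axis_def)
    next
      case 3 then show ?thesis unfolding T_def
        apply (intro CollectI exI[of _ "0::real^'m"] exI[of _ "0::real^'n"] exI[of _ "1::real"])
        by simp
    qed
  qed
  have KT: "convex_cone hull G \<subseteq> T" using hull_minimal[of G T convex_cone] GT cT by blast
  show ?thesis
  proof (cases "(c, ?p) \<in> convex_cone hull G")
    case True
    with KT obtain y s t where yst: "(c, ?p) = (y v* A - s, y \<bullet> b + t)" "(\<forall>i. 0 \<le> y$i) \<and> (\<forall>j. 0 \<le> s$j) \<and> (0::real) \<le> t"
      unfolding T_def by blast
    have "dual_feasible A c y" unfolding dual_feasible_def
      using yst by auto
    moreover have "y \<bullet> b \<le> ?p" using yst by auto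
    ultimately show ?thesis by blast
  next
    case False
    have cvx: "convex (convex_cone hull G)"
      by (meson convex_cone_convex_cone_hull convex_cone_def)
    have cl: "closed (convex_cone hull G)" by (rule closed_convex_cone_hull[OF finG])
    obtain a \<beta> where ab: "inner a (c, ?p) < \<beta>" "\<forall>k\<in>convex_cone hull G. \<beta> < inner a k"
      using separating_hyperplane_closed_point[OF cvx cl False] by blast
    have "\<beta> < 0" using ab(2) convex_cone_hull_contains_0 by fastforce
    have gen: "0 \<le> inner a g" if "g \<in> G" for g
    proof (rule ccontr)
      assume neg: "\<not> 0 \<le> inner a g"
      define r where "r = \<beta> / inner a g"
      have "0 \<le> r" using neg \<open>\<beta> < 0\<close> unfolding r_def by (simp add: divide_nonpos_neg)
      then have "r *\<^sub>R g \<in> convex_cone hull G" using that by (simp add: convex_cone_hull_mul hull_inc)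
      then have "\<beta> < inner a (r *\<^sub>R g)" using ab(2) by blast
      moreover have "inner a (r *\<^sub>R g) = \<beta>" using neg unfolding r_def by simp
      ultimately show False by simp
    qed
    obtain z lm where a: "a = (z, lm)" by (cases a)
    have rows: "0 \<le> z \<bullet> A$i + lm * b$i" for i
      using gen[of "(A$i, b$i)"] unfolding a G_def by (simp add: inner_Pair)
    have zneg: "z$j \<le> 0" for j
      using gen[of "(- axis j 1, 0)"] unfolding a G_def by (simp add: inner_Pair inner_axis)
    have lam: "0 \<le> lm"
      using gen[of "(0, 1)"] unfolding a G_def by (simp add: inner_Pair)
    have sep: "z \<bullet> c + lm * ?p < 0" using ab(1) \<open>\<beta> < 0\<close> unfolding a by (simp add: inner_Pair)
    have feas: "primal_feasible A b xs" and opt: "\<And>x'. primal_feasible A b x' \<Longrightarrow> c \<bullet> x' \<le> ?p"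
      using xs_opt unfolding primal_optimal_def by auto
    show ?thesis
    proof (cases "lm = 0")
      case True
      define x' where "x' = xs - z"
      have "primal_feasible A b x'" unfolding primal_feasible_def
      proof (intro conjI allI)
        fix i
        have "(A *v x') $ i = (A *v xs) $ i - A$i \<bullet> z"
          by (simp add: x'_def matrix_vector_mul_component inner_diff_right)
        also have "\<dots> \<le> b $ i" using rows[of i] True feas unfolding primal_feasible_def
          by (simp add: inner_commute) (smt (verit))
        finally show "(A *v x') $ i \<le> b $ i" .
      next
        fix j show "0 \<le> x' $ j" using zneg[of j] feas unfolding primal_feasible_def x'_def by (simp add: add_increasing2 [where b=0] ) (smt (verit))
      qed
      moreover have "c \<bullet> x' > ?p" using sep True unfolding x'_def by (simp add: inner_diff_right inner_commute)
      ultimately show ?thesis using opt by fastforce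
    next
      case False
      then have lp: "lm > 0" using lam by simp
      define x' where "x' = (- 1 / lm) *\<^sub>R z"
      have "primal_feasible A b x'" unfolding primal_feasible_def
      proof (intro conjI allI)
        fix i
        have "(A *v x') $ i = - (A$i \<bullet> z) / lm"
          by (simp add: x'_def matrix_vector_mul_component)
        also have "\<dots> \<le> b $ i" using rows[of i] lp
        proof -
          have "- (A$i \<bullet> z) \<le> b $ i * lm" using rows[of i] by (simp add: inner_commute mult.commute)
          then show ?thesis using lp by (metis minus_divide_left pos_divide_le_eq)
        qed
        finally show "(A *v x') $ i \<le> b $ i" .
      next
        fix j show "0 \<le> x' $ j" using zneg[of j] lp unfolding x'_def by (simp add: divide_nonpos_pos)
      qed
      moreover have "c \<bullet> x' > ?p"
      proof -
        have "c \<bullet> x' = - (z \<bullet> c) / lm" by (simp add: x'_def inner_commute)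
        moreover have "- (z \<bullet> c) > lm * ?p" using sep by simp
        ultimately show ?thesis using lp by (metis minus_divide_left pos_less_divide_eq mult.commute)
      qed
      ultimately show ?thesis using opt by fastforce
    qed
  qed
qed


lemma weak1:
  fixes A :: "real^'n^'m"
  assumes "dual_feasible A c y" "\<forall>j. 0 \<le> x$j"
  shows "c \<bullet> x \<le> y \<bullet> (A *v x)"
proof -
  have "c \<bullet> x \<le> (y v* A) \<bullet> x"
    unfolding inner_vec_def using assms unfolding dual_feasible_def
    by (intro sum_mono) (simp add: mult_right_mono)
  then show ?thesis by (simp add: dot_lmul_matrix)
qed

lemma weak2:
  fixes A :: "real^'n^'m"
  assumes "\<forall>i. 0 \<le> y$i" "\<forall>i. (A *v x) $ i \<le> b $ i"
  shows "y \<bullet> (A *v x) \<le> y \<bullet> b"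
  unfolding inner_vec_def using assms
  by (intro sum_mono) (simp add: mult_left_mono)

theorem mainTheorem12:
  fixes A :: "real^'n^'m" and b :: "real^'m" and c :: "real^'n"
    and xs :: "real^'n" and ys :: "real^'m" and x :: "real^'n"
  assumes bounded: "bdd_above ((\<lambda>x'. c \<bullet> x') ` {x'. primal_feasible A b x'})"
    and xs_opt: "primal_optimal A b c xs"
    and xs_unique: "\<And>x'. primal_optimal A b c x' \<Longrightarrow> x' = xs"
    and ys_opt: "dual_optimal A b c ys"
    and ys_unique: "\<And>y'. dual_optimal A b c y' \<Longrightarrow> y' = ys"
    and x_feas: "primal_feasible A b x"
  shows "c \<bullet> (xs - x) \<ge> alpha_D ys * sub_rows_norm A (dual_support ys) (xs - x)"
proof -
  obtain y where y: "dual_feasible A c y" "y \<bullet> b \<le> c \<bullet> xs"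
    using strong_dual[OF xs_opt] by blast
  have ysf: "dual_feasible A c ys" and ysb: "ys \<bullet> b \<le> y \<bullet> b"
    using ys_opt y(1) unfolding dual_optimal_def by auto
  have xsf: "primal_feasible A b xs" using xs_opt unfolding primal_optimal_def by auto
  have ys0: "\<forall>i. 0 \<le> ys$i" using ysf unfolding dual_feasible_def by auto
  have w1: "c \<bullet> xs \<le> ys \<bullet> (A *v xs)" using weak1[OF ysf] xsf unfolding primal_feasible_def by auto
  have w2: "ys \<bullet> (A *v xs) \<le> ys \<bullet> b" using weak2[OF ys0] xsf unfolding primal_feasible_def by auto
  have eq1: "c \<bullet> xs = ys \<bullet> b" and eq2: "ys \<bullet> (A *v xs) = ys \<bullet> b"
    using w1 w2 ysb y(2) by linarith+
  have "(\<Sum>i\<in>UNIV. ys$i * (b$i - (A *v xs)$i)) = 0"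
    using eq2 unfolding inner_vec_def by (simp add: right_diff_distrib sum_subtractf)
  moreover have "\<forall>i\<in>UNIV. 0 \<le> ys$i * (b$i - (A *v xs)$i)"
    using ys0 xsf unfolding primal_feasible_def by simp
  ultimately have zer: "\<forall>i\<in>UNIV. ys$i * (b$i - (A *v xs)$i) = 0"
    using sum_nonneg_eq_0_iff[of UNIV "\<lambda>i. ys$i * (b$i - (A *v xs)$i)"] by simp
  have cs: "(A *v xs)$i = b$i" if "i \<in> dual_support ys" for i
  proof -
    have "0 < ys$i" using that unfolding dual_support_def by simp
    moreover have "ys$i * (b$i - (A *v xs)$i) = 0" using zer by blast
    ultimately show ?thesis by simp
  qed

  define V where "V = dual_support ys"
  define d where "d = xs - x"
  define u where "u i = (A *v d)$i" for i
  have u_nn: "0 \<le> u i" if "i \<in> V" for i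
    using cs[of i] that x_feas unfolding u_def d_def V_def primal_feasible_def
    by (simp add: matrix_vector_mult_diff_distrib)
  have "c \<bullet> x \<le> ys \<bullet> (A *v x)" using weak1[OF ysf] x_feas unfolding primal_feasible_def by auto
  then have "c \<bullet> d \<ge> ys \<bullet> (A *v d)"
    using eq1 eq2 unfolding d_def by (simp add: inner_diff_right matrix_vector_mult_diff_distrib)
  also have "ys \<bullet> (A *v d) = (\<Sum>i\<in>V. ys$i * u i)"
  proof -
    have z: "ys $ i * (A *v d) $ i = 0" if "i \<notin> V" for i
    proof -
      have "ys $ i = 0" using ys0 that unfolding V_def dual_support_def
        by (metis antisym mem_Collect_eq not_less)
      then show ?thesis by simp
    qed
    show ?thesis unfolding inner_vec_def u_def inner_real_def
      by (rule sum.mono_neutral_right) (use z in auto)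
  qed
  finally have main: "(\<Sum>i\<in>V. ys$i * u i) \<le> c \<bullet> d" .
  have norm: "sub_rows_norm A V d = L2_set u V"
    unfolding sub_rows_norm_def L2_set_def u_def ..
  show ?thesis
  proof (cases "V = {}")
    case True
    then show ?thesis using main unfolding V_def[symmetric] d_def[symmetric] norm by simp
  next
    case False
    define \<alpha> where "\<alpha> = alpha_D ys"
    have fin: "finite ((\<lambda>j. ys $ j) ` V)" by simp
    have al: "\<alpha> \<le> ys$i" if "i \<in> V" for i
      unfolding \<alpha>_def alpha_D_def V_def[symmetric] using fin that by simp
    have apos: "0 \<le> \<alpha>"
    proof -
      have "\<alpha> \<in> (\<lambda>j. ys $ j) ` V" unfolding \<alpha>_def alpha_D_def V_def[symmetric]
        using False fin by (intro Min_in) auto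
      then show ?thesis unfolding V_def dual_support_def by auto
    qed
    have "\<alpha> * L2_set u V \<le> \<alpha> * sum u V"
      using apos L2_set_le_sum[of V u] u_nn by (simp add: mult_left_mono)
    also have "\<dots> = (\<Sum>i\<in>V. \<alpha> * u i)" by (simp add: sum_distrib_left)
    also have "\<dots> \<le> (\<Sum>i\<in>V. ys$i * u i)"
      by (intro sum_mono mult_right_mono al u_nn)
    finally show ?thesis using main unfolding \<alpha>_def V_def[symmetric] d_def[symmetric] norm by simp
  qed
qed

end
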